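(* Under the hypotheses and notation of the context, let $\mathcal{S}=\{x_1,\dots,x_k\}\times\mathbb{R}$. Let $\theta^{\mathrm{approx}}$ be any gradient-based update of $\theta^{\mathrm{full}}$ in which every dataset $D_t$ used satisfies $D_t\subseteq\mathcal{S}$. Then $$\|\theta^{\setminus k}-\theta^{\mathrm{res}}\|_2\le\|\theta^{\setminus k}-\theta^{\mathrm{approx}}\|_2 .$$
   Context: Let $x_1,\dots,x_n\in\mathbb{R}^d$, $y_1,\dots,y_n\in\mathbb{R}$, $1\le k\le d$, $n-k\ge d$, with the $x_i$ in general position, and fix $\lambda\ge0$. $X$ is the matrix with rows $x_i^\intercal$, $Y=(y_i)$. $\theta^{\mathrm{full}}=\arg\min_\theta\sum_{i=1}^n\frac12(\theta^\intercal x_i-y_i)^2+\frac\lambda2\|\theta\|^2$ and $\theta^{\setminus k}=\arg\min_\theta\sum_{i=k+1}^n\frac12(\theta^\intercal x_i-y_i)^2+\frac\lambda2\|\theta\|^2$. With $\hat y^{\setminus k}_i=(\theta^{\setminus k})^\intercal x_i$ and $A$ the Moore–Penrose pseudoinverse of $\sum_{i=1}^k x_ix_i^\intercal$, the projective residual update is $\theta^{\mathrm{res}}=\theta^{\mathrm{full}}-A\sum_{i=1}^k((\theta^{\mathrm{full}})^\intercal x_i-\hat y^{\setminus k}_i)x_i$. For a finite dataset $D=\{(\bar x_i,\bar y_i)\}_{i=1}^N$ set $L^D(\theta)=\sum_{i=1}^N\frac12(\theta^\intercal\bar x_i-\bar y_i)^2$. A gradient-based update of $\theta^{\mathrm{full}}$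 is any vector $\theta^{\mathrm{approx}}=\theta_T$ obtained by $\theta_0=\theta^{\mathrm{full}}$, $\theta_{t+1}=\theta_t-\alpha_t\nabla_\theta L^{D_t}(\theta_t)$ for some $T\ge0$, scalars $\alpha_t\in\mathbb{R}$ and finite datasets $D_t$. *)

theory Defs
  imports "HOL-Analysis.Analysis"
begin

definition general_position :: "(nat \<Rightarrow> real^'d) \<Rightarrow> nat set \<Rightarrow> bool" where
  "general_position x I \<longleftrightarrow>
     (\<forall>S. S \<subseteq> I \<and> card S \<le> CARD('d) \<longrightarrow> inj_on x S \<and> independent (x ` S))"

definition ridge_obj :: "(nat \<Rightarrow> real^'d) \<Rightarrow> (nat \<Rightarrow> real) \<Rightarrow> real \<Rightarrow> nat set \<Rightarrow> real^'d \<Rightarrow> real" where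
  "ridge_obj x y lam I \<theta> = (\<Sum>i\<in>I. (1/2) * (\<theta> \<bullet> x i - y i)^2) + (lam/2) * (norm \<theta>)^2"

definition is_argmin :: "('a \<Rightarrow> real) \<Rightarrow> 'a \<Rightarrow> bool" where
  "is_argmin f z \<longleftrightarrow> (\<forall>w. f z \<le> f w)"

definition outer :: "real^'d \<Rightarrow> real^'d^'d" where
  "outer v = (\<chi> i j. v$i * v$j)"

definition pinv :: "real^'d^'d \<Rightarrow> real^'d^'d" where
  "pinv M = (THE B. M ** B ** M = M \<and> B ** M ** B = B \<and>
                    transpose (M ** B) = M ** B \<and> transpose (B ** M) = B ** M)"

definition loss :: "((real^'d) \<times> real) list \<Rightarrow> real^'d \<Rightarrow> real" where
  "loss D \<theta> = (\<Sum>p\<leftarrow>D. (1/2) * (\<theta> \<bullet> fst p - snd p)^2)"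

definition grad_update_within :: "((real^'d) \<times> real) set \<Rightarrow> real^'d \<Rightarrow> real^'d \<Rightarrow> bool" where
  "grad_update_within S \<theta>0 \<theta>a \<longleftrightarrow>
     (\<exists>(T::nat) (\<alpha>::nat \<Rightarrow> real) (D::nat \<Rightarrow> ((real^'d) \<times> real) list) (\<theta>s::nat \<Rightarrow> real^'d).
        \<theta>s 0 = \<theta>0 \<and> \<theta>s T = \<theta>a \<and>
        (\<forall>t<T. set (D t) \<subseteq> S \<and>
           (\<exists>g. (GDERIV (loss (D t)) (\<theta>s t) :> g) \<and> \<theta>s (Suc t) = \<theta>s t - \<alpha> t *\<^sub>R g)))"

end

theory Submission
  imports Defs
begin

lemma sym_dot:
  fixes M :: "real^'n^'n"
  assumes "transpose M = M"
  shows "(M *v u) \<bullet> v = u \<bullet> (M *v v)"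
proof -
  have "u \<bullet> (M *v v) = (u v* M) \<bullet> v" by (simp add: dot_lmul_matrix)
  also have "\<dots> = (u v* transpose M) \<bullet> v" using assms by simp
  also have "\<dots> = (M *v u) \<bullet> v" by simp
  finally show ?thesis by simp
qed

lemma vec_eq_by_dot:
  fixes a b :: "real^'n"
  assumes "\<And>v. a \<bullet> v = b \<bullet> v" shows "a = b"
proof -
  have "(a - b) \<bullet> (a - b) = 0" using assms[of "a-b"] by (simp add: inner_diff_left)
  thus ?thesis by simp
qed

lemma sym_from_dot:
  fixes P :: "real^'n^'n"
  assumes "\<And>u v. (P *v u) \<bullet> v = u \<bullet> (P *v v)"
  shows "transpose P = P"
proof -
  have "transpose P *v u = P *v u" for u
  proof (rule vec_eq_by_dot)
    fix v
    have "transpose P *v u = u v* P"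
      by (metis transpose_transpose vector_transpose_matrix)
    then show "(transpose P *v u) \<bullet> v = (P *v u) \<bullet> v"
      by (simp add: dot_lmul_matrix assms)
  qed
  thus ?thesis by (simp add: matrix_eq)
qed

lemma penrose_unique:
  fixes M B C :: "real^'n^'n"
  assumes "M ** B ** M = M" "B ** M ** B = B" "transpose (M ** B) = M ** B" "transpose (B ** M) = B ** M"
    and "M ** C ** M = M" "C ** M ** C = C" "transpose (M ** C) = M ** C" "transpose (C ** M) = C ** M"
  shows "B = C"
proof -
  have "B = B ** (M ** B)" using assms(2) by (simp add: matrix_mul_assoc)
  also have "\<dots> = B ** transpose (M ** B)" using assms(3) by simp
  also have "\<dots> = B ** (transpose B ** transpose M)" by (simp add: matrix_transpose_mul)
  also have "\<dots> = B ** (transpose B ** transpose (M ** C ** M))" using assms(5) by simp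
  also have "\<dots> = B ** (transpose (M ** B) ** transpose (M ** C))"
    by (simp add: matrix_transpose_mul matrix_mul_assoc)
  also have "\<dots> = B ** M ** C" using assms(3,7) assms(1) by (simp add: matrix_mul_assoc)
  finally have b: "B = B ** M ** C" .
  have "C = (C ** M) ** C" using assms(6) by (simp add: matrix_mul_assoc)
  also have "\<dots> = transpose (C ** M) ** C" using assms(8) by simp
  also have "\<dots> = (transpose M ** transpose C) ** C" by (simp add: matrix_transpose_mul)
  also have "\<dots> = (transpose (M ** B ** M) ** transpose C) ** C" using assms(1) by simp
  also have "\<dots> = (transpose (B ** M) ** transpose (C ** M)) ** C"
    by (simp add: matrix_transpose_mul matrix_mul_assoc)
  also have "\<dots> = B ** M ** (C ** M ** C)" using assms(4,8) by (simp add: matrix_mul_assoc)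
  also have "\<dots> = B ** M ** C" using assms(6) by simp
  finally show ?thesis using b by simp
qed

lemma outer_sum_mult:
  fixes f :: "'i \<Rightarrow> real^'n"
  shows "(\<Sum>i\<in>I. outer (f i)) *v w = (\<Sum>i\<in>I. (f i \<bullet> w) *\<^sub>R f i)"
proof (cases "finite I")
  case True
  then show ?thesis
  proof induction
    case empty then show ?case by (simp add: matrix_vector_mult_def vec_eq_iff)
  next
    case (insert a F)
    have "outer (f a) *v w = (f a \<bullet> w) *\<^sub>R f a"
      by (simp add: outer_def matrix_vector_mult_def vec_eq_iff inner_vec_def sum_distrib_left mult_ac)
    with insert show ?case by (simp add: matrix_vector_mult_add_rdistrib)
  qed
next
  case False then show ?thesis by (simp add: matrix_vector_mult_def vec_eq_iff)
qed

lemma pinv_exists: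
  fixes M :: "real^'n^'n"
  assumes sym: "transpose M = M"
  shows "\<exists>B. M ** B ** M = M \<and> B ** M ** B = B \<and>
                    transpose (M ** B) = M ** B \<and> transpose (B ** M) = B ** M"
proof -
  define S where "S = range ((*v) M)"
  have subS: "subspace S" unfolding S_def
    by (rule linear_subspace_image[OF matrix_vector_mul_linear subspace_UNIV])
  obtain Bs where Bs: "Bs \<subseteq> S" "pairwise orthogonal Bs" "\<And>x. x \<in> Bs \<Longrightarrow> norm x = 1"
     "independent Bs" "span Bs = S"
    using orthonormal_basis_subspace[OF subS] by metis
  have finB: "finite Bs" using Bs(4) independent_imp_finite by blast
  define Q where "Q = (\<Sum>b\<in>Bs. outer b)"
  have Qv: "Q *v x = (\<Sum>b\<in>Bs. (b \<bullet> x) *\<^sub>R b)" for x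
    unfolding Q_def by (rule outer_sum_mult)
  have Qsym: "transpose Q = Q"
  proof (rule sym_from_dot)
    fix u v :: "real^'n"
    show "(Q *v u) \<bullet> v = u \<bullet> (Q *v v)"
      by (simp add: Qv inner_sum_left inner_sum_right mult.commute inner_commute)
  qed
  have Qdot: "(Q *v u) \<bullet> v = u \<bullet> (Q *v v)" for u v using sym_dot[OF Qsym] .
  have QS: "Q *v x \<in> S" for x
    unfolding Qv using Bs(1) by (intro subspace_sum[OF subS] subspace_scale[OF subS]) auto
  have Qb: "Q *v b = b" if "b \<in> Bs" for b
  proof -
    have "Q *v b = (\<Sum>c\<in>Bs. if c = b then b else 0)"
      unfolding Qv
    proof (rule sum.cong)
      fix c assume c: "c \<in> Bs"
      show "(c \<bullet> b) *\<^sub>R c = (if c = b then b else 0)"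
      proof (cases "c = b")
        case True
        then have "c \<bullet> c = 1" using Bs(3)[OF c] by (simp add: dot_square_norm)
        then show ?thesis using True by simp
      next
        case False
        then have "orthogonal c b" using Bs(2) c that by (auto simp: pairwise_def)
        then show ?thesis using False by (simp add: orthogonal_def)
      qed
    qed simp
    also have "\<dots> = b" using finB that by simp
    finally show ?thesis .
  qed
  have Qfix: "Q *v s = s" if "s \<in> S" for s
  proof -
    have "s \<in> span Bs" using that Bs(5) by simp
    have "(\<lambda>x. Q *v x) s = id s"
      by (rule linear_eq_on_span[OF matrix_vector_mul_linear linear_id, where B=Bs])
         (use \<open>s \<in> span Bs\<close> Qb in auto)
    then show ?thesis by simp
  qed
  have QQ: "Q *v (Q *v x) = Q *v x" for x using Qfix[OF QS] .
  have MS: "M *v x \<in> S" for x unfolding S_def by simp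
  have Mdot: "(M *v u) \<bullet> v = u \<bullet> (M *v v)" for u v using sym_dot[OF sym] .
  have QMv: "Q *v (M *v x) = M *v x" for x using Qfix[OF MS] .
  have MQv: "M *v (Q *v x) = M *v x" for x
  proof -
    define w where "w = x - Q *v x"
    have "(M *v w) \<bullet> (M *v w) = w \<bullet> (M *v (M *v w))" by (rule Mdot)
    also have "\<dots> = w \<bullet> (Q *v (M *v (M *v w)))" by (simp add: QMv)
    also have "\<dots> = (Q *v w) \<bullet> (M *v (M *v w))" by (simp add: Qdot)
    also have "Q *v w = 0" unfolding w_def by (simp add: matrix_vector_mult_diff_distrib QQ)
    finally have "M *v w = 0" by simp
    then show ?thesis unfolding w_def by (simp add: matrix_vector_mult_diff_distrib)
  qed
  define N where "N = M + mat 1 - Q"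
  have Nv: "N *v z = M *v z + z - Q *v z" for z
    unfolding N_def by (simp add: matrix_vector_mult_add_rdistrib matrix_vector_mult_diff_rdistrib)
  have "inj ((*v) N)"
  proof -
    have "z = 0" if z: "N *v z = 0" for z
    proof -
      have orth: "(z - Q *v z) \<bullet> (M *v z) = 0"
      proof -
        have "(z - Q *v z) \<bullet> (M *v z) = (z - Q *v z) \<bullet> (Q *v (M *v z))" by (simp add: QMv)
        also have "\<dots> = (Q *v (z - Q *v z)) \<bullet> (M *v z)" by (simp add: Qdot)
        also have "\<dots> = 0" by (simp add: matrix_vector_mult_diff_distrib QQ)
        finally show ?thesis .
      qed
      have "0 = (N *v z) \<bullet> (M *v z)" using z by simp
      also have "\<dots> = (M *v z) \<bullet> (M *v z) + (z - Q *v z) \<bullet> (M *v z)"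
        by (simp add: Nv inner_add_left inner_diff_left)
      finally have Mz: "M *v z = 0" using orth by simp
      then have zQ: "z = Q *v z" using z by (simp add: Nv)
      then obtain w where w: "z = M *v w" using QS[of z] unfolding S_def by auto
      have "z \<bullet> z = w \<bullet> (M *v z)" using w Mdot by metis
      then show ?thesis using Mz by simp
    qed
    then show ?thesis by (simp add: linear_injective_0[OF matrix_vector_mul_linear])
  qed
  then obtain Ni where Ni: "Ni ** N = mat 1" using matrix_left_invertible_injective by blast
  then have Ni2: "N ** Ni = mat 1" using matrix_left_right_inverse by blast
  have NQ: "N ** Q = M" by (simp add: matrix_eq Nv QQ MQv QMv flip: matrix_vector_mul_assoc)
  have QN: "Q ** N = M" by (simp add: matrix_eq Nv QQ MQv QMv matrix_vector_mult_diff_distrib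
         matrix_vector_right_distrib flip: matrix_vector_mul_assoc)
  have QQm: "Q ** Q = Q" by (simp add: matrix_eq QQ flip: matrix_vector_mul_assoc)
  have QMm: "Q ** M = M" by (simp add: matrix_eq QMv flip: matrix_vector_mul_assoc)
  have Q1: "Ni ** M = Q"
  proof -
    have "Ni ** M = Ni ** (N ** Q)" using NQ by simp
    also have "\<dots> = Q" by (simp add: matrix_mul_assoc Ni)
    finally show ?thesis .
  qed
  have Q2: "M ** Ni = Q"
  proof -
    have "M ** Ni = (Q ** N) ** Ni" using QN by simp
    also have "\<dots> = Q" by (simp flip: matrix_mul_assoc add: Ni2)
    finally show ?thesis .
  qed
  define B where "B = Ni ** Q"
  have MB: "M ** B = Q" unfolding B_def by (simp add: matrix_mul_assoc Q2 QQm)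
  have BM: "B ** M = Q" unfolding B_def by (simp flip: matrix_mul_assoc add: QMm Q1)
  have "M ** B ** M = M" by (simp add: MB QMm)
  moreover have "B ** M ** B = B"
  proof -
    have "B ** M ** B = B ** (M ** B)" by (simp add: matrix_mul_assoc)
    also have "\<dots> = B ** Q" by (simp only: MB)
    also have "\<dots> = Ni ** (Q ** Q)" by (simp add: B_def matrix_mul_assoc)
    also have "\<dots> = B" by (simp only: QQm B_def)
    finally show ?thesis .
  qed
  moreover have "transpose (M ** B) = M ** B" by (simp only: MB Qsym)
  moreover have "transpose (B ** M) = B ** M" by (simp only: BM Qsym)
  ultimately show ?thesis by (rule exI[where x=B, OF conjI[OF _ conjI[OF _ conjI]]])
qed

lemma pinv_props:
  fixes M :: "real^'n^'n"
  assumes sym: "transpose M = M"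
  shows "M ** pinv M ** M = M \<and> pinv M ** M ** pinv M = pinv M \<and>
         transpose (M ** pinv M) = M ** pinv M \<and> transpose (pinv M ** M) = pinv M ** M"
proof -
  obtain B where B: "M ** B ** M = M \<and> B ** M ** B = B \<and>
                    transpose (M ** B) = M ** B \<and> transpose (B ** M) = B ** M"
    using pinv_exists[OF sym] by blast
  show ?thesis unfolding pinv_def
  proof (rule theI[where a=B])
    show "M ** B ** M = M \<and> B ** M ** B = B \<and>
                    transpose (M ** B) = M ** B \<and> transpose (B ** M) = B ** M" by (rule B)
  next
    fix C assume "M ** C ** M = M \<and> C ** M ** C = C \<and>
                    transpose (M ** C) = M ** C \<and> transpose (C ** M) = C ** M"
    then show "C = B" using penrose_unique B by metis
  qed
qed

lemma gderiv_loss: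
  "GDERIV (loss D) \<theta> :> (\<Sum>p\<leftarrow>D. (\<theta> \<bullet> fst p - snd p) *\<^sub>R fst p)"
proof (induction D)
  case Nil
  have l0: "loss [] = (\<lambda>_. 0)" by (auto simp: loss_def)
  show ?case unfolding l0 by (simp add: GDERIV_const)
next
  case (Cons p D)
  have l: "loss (p # D) = (\<lambda>\<theta>. (1/2) * (\<theta> \<bullet> fst p - snd p)^2 + loss D \<theta>)"
    by (auto simp: loss_def)
  have g1: "GDERIV (\<lambda>\<theta>. \<theta> \<bullet> fst p - snd p) \<theta> :> fst p"
    unfolding gderiv_def by (auto intro!: derivative_eq_intros simp: inner_commute)
  have d: "DERIV (\<lambda>t. (1/2) * t^2) (\<theta> \<bullet> fst p - snd p) :> (\<theta> \<bullet> fst p - snd p)"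
    by (auto intro!: derivative_eq_intros)
  have "GDERIV (\<lambda>\<theta>. (1/2) * (\<theta> \<bullet> fst p - snd p)^2) \<theta> :> (\<theta> \<bullet> fst p - snd p) *\<^sub>R fst p"
    using GDERIV_DERIV_compose[OF g1 d] by simp
  from GDERIV_add[OF this Cons.IH] show ?case unfolding l by simp
qed

lemma gderiv_unique:
  fixes g g' :: "real^'n"
  assumes "GDERIV f x :> g" "GDERIV f x :> g'" shows "g = g'"
proof -
  have "(\<lambda>h. h \<bullet> g) = (\<lambda>h. h \<bullet> g')"
    using has_derivative_unique assms unfolding gderiv_def by blast
  then show ?thesis by (metis vec_eq_by_dot inner_commute)
qed

lemma list_sum_span:
  fixes L :: "((real^'n) \<times> real) list"
  assumes "set L \<subseteq> X \<times> UNIV"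
  shows "(\<Sum>p\<leftarrow>L. c p *\<^sub>R fst p) \<in> span X"
  using assms
proof (induction L)
  case Nil then show ?case by (simp add: span_zero)
next
  case (Cons p L)
  then have "fst p \<in> X" by auto
  then have "c p *\<^sub>R fst p \<in> span X" by (intro span_scale span_base)
  then show ?case using Cons by (simp add: span_add)
qed

theorem corollary2:
  fixes x :: "nat \<Rightarrow> real^'d" and y :: "nat \<Rightarrow> real"
    and n k :: nat and lam :: real
    and \<theta>full \<theta>k \<theta>approx :: "real^'d"
  assumes "1 \<le> k" "k \<le> CARD('d)" "n - k \<ge> CARD('d)" "k \<le> n"
    and "general_position x {1..n}"
    and "lam \<ge> 0"
    and "is_argmin (ridge_obj x y lam {1..n}) \<theta>full"
    and "is_argmin (ridge_obj x y lam {k+1..n}) \<theta>k"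
    and "grad_update_within ((x ` {1..k}) \<times> UNIV) \<theta>full \<theta>approx"
  shows "let A = pinv (\<Sum>i\<in>{1..k}. outer (x i));
             \<theta>res = \<theta>full - A *v (\<Sum>i\<in>{1..k}. (\<theta>full \<bullet> x i - \<theta>k \<bullet> x i) *\<^sub>R x i)
         in norm (\<theta>k - \<theta>res) \<le> norm (\<theta>k - \<theta>approx)"
proof -
  define X where "X = x ` {1..k}"
  define M where "M = (\<Sum>i\<in>{1..k}. outer (x i))"
  define A where "A = pinv M"
  define u where "u = \<theta>full - \<theta>k"
  define P where "P = A ** M"
  define z where "z = u - P *v u"
  have Mv: "M *v w = (\<Sum>i\<in>{1..k}. (x i \<bullet> w) *\<^sub>R x i)" for w
    unfolding M_def by (rule outer_sum_mult)
  have Msym: "transpose M = M"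
  proof (rule sym_from_dot)
    fix u v :: "real^'d"
    show "(M *v u) \<bullet> v = u \<bullet> (M *v v)"
      by (simp add: Mv inner_sum_left inner_sum_right mult.commute inner_commute)
  qed
  note pp = pinv_props[OF Msym, folded A_def]
  have Psym: "transpose P = P" unfolding P_def using pp by blast
  have PP: "P ** P = P"
  proof -
    have "P ** P = (A ** M ** A) ** M" unfolding P_def by (simp add: matrix_mul_assoc)
    also have "\<dots> = P" using pp unfolding P_def by simp
    finally show ?thesis .
  qed
  have sumeq: "(\<Sum>i\<in>{1..k}. (\<theta>full \<bullet> x i - \<theta>k \<bullet> x i) *\<^sub>R x i) = M *v u"
    unfolding Mv u_def by (simp add: inner_diff_right inner_commute)
  have res: "\<theta>k - (\<theta>full - A *v (M *v u)) = - z"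
    unfolding z_def P_def u_def by (simp add: matrix_vector_mul_assoc)
  have Mz: "M *v z = 0"
  proof -
    have "M *v (P *v u) = (M ** A ** M) *v u" unfolding P_def
      by (simp add: matrix_vector_mul_assoc matrix_mul_assoc)
    then show ?thesis unfolding z_def using pp by (simp add: matrix_vector_mult_diff_distrib)
  qed
  have zx: "z \<bullet> x i = 0" if "i \<in> {1..k}" for i
  proof -
    have "0 = z \<bullet> (M *v z)" using Mz by simp
    also have "\<dots> = (\<Sum>i\<in>{1..k}. (x i \<bullet> z) * (x i \<bullet> z))"
      by (simp add: Mv inner_sum_right inner_commute)
    finally have "(\<Sum>i\<in>{1..k}. (x i \<bullet> z) * (x i \<bullet> z)) = 0" by simp
    then have "\<forall>i\<in>{1..k}. (x i \<bullet> z) * (x i \<bullet> z) = 0"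
      by (subst (asm) sum_nonneg_eq_0_iff) auto
    then show ?thesis using that by (simp add: inner_commute)
  qed
  have zspan: "orthogonal z w" if "w \<in> span X" for w
  proof -
    have "\<And>y. y \<in> X \<Longrightarrow> orthogonal z y" using zx by (auto simp: X_def orthogonal_def)
    then show ?thesis using orthogonal_to_span[OF that] by blast
  qed
  have zPu: "z \<bullet> (P *v u) = 0"
  proof -
    have "z \<bullet> (P *v u) = u \<bullet> (P *v u) - (P *v u) \<bullet> (P *v u)"
      unfolding z_def by (simp add: inner_diff_left)
    also have "(P *v u) \<bullet> (P *v u) = u \<bullet> (P *v (P *v u))" by (rule sym_dot[OF Psym])
    also have "P *v (P *v u) = P *v u" by (simp add: matrix_vector_mul_assoc PP)
    finally show ?thesis by simp
  qed
  \<comment> \<open>the gradient steps stay in the affine space theta_full + span X\<close>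
  obtain T \<alpha> D \<theta>s where G: "\<theta>s 0 = \<theta>full" "\<theta>s T = \<theta>approx"
    "\<forall>t<T. set (D t) \<subseteq> X \<times> UNIV \<and>
           (\<exists>g. (GDERIV (loss (D t)) (\<theta>s t) :> g) \<and> \<theta>s (Suc t) = \<theta>s t - \<alpha> t *\<^sub>R g)"
    using assms(9) unfolding grad_update_within_def X_def by blast
  have inspan: "\<theta>s t - \<theta>full \<in> span X" if "t \<le> T" for t
    using that
  proof (induction t)
    case 0 then show ?case using G(1) by (simp add: span_zero)
  next
    case (Suc t)
    then have t: "t < T" by simp
    obtain g where g: "GDERIV (loss (D t)) (\<theta>s t) :> g" "\<theta>s (Suc t) = \<theta>s t - \<alpha> t *\<^sub>R g"
      and DS: "set (D t) \<subseteq> X \<times> UNIV" using G(3) t by blast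
    have "g = (\<Sum>p\<leftarrow>D t. (\<theta>s t \<bullet> fst p - snd p) *\<^sub>R fst p)"
      using gderiv_unique[OF g(1) gderiv_loss] .
    also have "\<dots> \<in> span X" using DS by (rule list_sum_span)
    finally have "g \<in> span X" .
    then have "\<theta>s t - \<theta>full - \<alpha> t *\<^sub>R g \<in> span X"
      using Suc.IH t \<open>g \<in> span X\<close> by (simp add: span_diff span_scale)
    moreover have "\<theta>s (Suc t) - \<theta>full = \<theta>s t - \<theta>full - \<alpha> t *\<^sub>R g" using g(2) by (simp add: algebra_simps)
    ultimately show ?case by metis
  qed
  have v: "\<theta>approx - \<theta>full \<in> span X" using inspan[of T] G(2) by simp
  define w where "w = P *v u + (\<theta>approx - \<theta>full)"
  have "orthogonal z w" unfolding w_def orthogonal_def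
    using zPu zspan[OF v] by (simp add: inner_add_right orthogonal_def)
  then have pyth: "(norm (z + w))\<^sup>2 = (norm z)\<^sup>2 + (norm w)\<^sup>2" by (rule norm_add_Pythagorean)
  have "norm z \<le> norm (z + w)"
    using pyth by (smt (verit) norm_ge_zero power2_le_imp_le zero_le_power2)
  moreover have "\<theta>k - \<theta>approx = - (z + w)" unfolding w_def z_def u_def by simp
  ultimately have "norm (\<theta>k - (\<theta>full - A *v (M *v u))) \<le> norm (\<theta>k - \<theta>approx)"
    using res by (metis norm_minus_cancel)
  then show ?thesis unfolding Let_def M_def[symmetric] A_def[symmetric] sumeq .
qed

end
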